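(* In an orbit-finite monoid, a sequence $x_1,\dots,x_n$ (with $n\ge 2$) is smooth if and only if for every $i<n$ the two-element sequence $x_i,x_{i+1}$ is smooth.
   Context: Atoms $\mathbb A$ are a countably infinite set acted on by its bijections (atom automorphisms). An orbit-finite monoid is a monoid whose underlying set is orbit-finite (every element finitely supported, and for some tuple $\bar a$ of atoms the set is a union of finitely many orbits of the group of automorphisms fixing $\bar a$ pointwise) and whose multiplication is finitely supported. A sequence $x_1,\dots,x_n$ of monoid elements is smooth if for every $i\in\{1,\dots,n\}$ there exist monoid elements $y,z$ with $y\,x_1\cdots x_n\,z=x_i$. *)

theory Defs
  imports Main
begin

text \<open>Atoms are modelled by the countably infinite type nat; atom automorphisms
are the bijections nat \<Rightarrow> nat.\<close>

definition atom_action :: "((nat \<Rightarrow> nat) \<Rightarrow> 'm \<Rightarrow> 'm) \<Rightarrow> bool" where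
  "atom_action act \<longleftrightarrow>
     (\<forall>x. act id x = x) \<and>
     (\<forall>\<pi> \<sigma> x. bij \<pi> \<longrightarrow> bij \<sigma> \<longrightarrow> act (\<pi> \<circ> \<sigma>) x = act \<pi> (act \<sigma> x))"

definition fixes_pointwise :: "(nat \<Rightarrow> nat) \<Rightarrow> nat set \<Rightarrow> bool" where
  "fixes_pointwise \<pi> S \<longleftrightarrow> bij \<pi> \<and> (\<forall>a\<in>S. \<pi> a = a)"

definition supports :: "((nat \<Rightarrow> nat) \<Rightarrow> 'm \<Rightarrow> 'm) \<Rightarrow> nat set \<Rightarrow> 'm \<Rightarrow> bool" where
  "supports act S x \<longleftrightarrow> (\<forall>\<pi>. fixes_pointwise \<pi> S \<longrightarrow> act \<pi> x = x)"

definition finitely_supported :: "((nat \<Rightarrow> nat) \<Rightarrow> 'm \<Rightarrow> 'm) \<Rightarrow> 'm \<Rightarrow> bool" where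
  "finitely_supported act x \<longleftrightarrow> (\<exists>S. finite S \<and> supports act S x)"

definition orbit_fix :: "((nat \<Rightarrow> nat) \<Rightarrow> 'm \<Rightarrow> 'm) \<Rightarrow> nat set \<Rightarrow> 'm \<Rightarrow> 'm set" where
  "orbit_fix act S x = {act \<pi> x | \<pi>. fixes_pointwise \<pi> S}"

definition orbit_finite :: "((nat \<Rightarrow> nat) \<Rightarrow> 'm \<Rightarrow> 'm) \<Rightarrow> 'm set \<Rightarrow> bool" where
  "orbit_finite act M \<longleftrightarrow>
     (\<forall>x\<in>M. finitely_supported act x) \<and>
     (\<exists>S F. finite S \<and> finite F \<and> M = (\<Union>x\<in>F. orbit_fix act S x))"

definition orbit_finite_monoid :: "((nat \<Rightarrow> nat) \<Rightarrow> 'm::monoid_mult \<Rightarrow> 'm) \<Rightarrow> bool" where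
  "orbit_finite_monoid act \<longleftrightarrow>
     atom_action act \<and> orbit_finite act (UNIV :: 'm set) \<and>
     (\<exists>S. finite S \<and>
        (\<forall>\<pi>. fixes_pointwise \<pi> S \<longrightarrow> (\<forall>x y. act \<pi> (x * y) = act \<pi> x * act \<pi> y)))"

definition smooth :: "'m::monoid_mult list \<Rightarrow> bool" where
  "smooth xs \<longleftrightarrow> (\<forall>i<length xs. \<exists>y z. y * prod_list xs * z = xs ! i)"

end

theory Submission
  imports Defs "HOL-Library.FuncSet"
begin

lemma act_agree:
  assumes aa: "atom_action act" and sA: "supports act A x"
    and b1: "bij \<sigma>" and b2: "bij \<sigma>'" and ag: "\<forall>a\<in>A. \<sigma> a = \<sigma>' a"
  shows "act \<sigma> x = act \<sigma>' x"
proof -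
  define \<rho> where "\<rho> = inv \<sigma>' \<circ> \<sigma>"
  have br: "bij \<rho>" unfolding \<rho>_def using b1 b2 by (simp add: bij_comp bij_imp_bij_inv)
  have fx: "\<forall>a\<in>A. \<rho> a = a" unfolding \<rho>_def using ag b2
    by (simp add: bij_is_inj)
  have "act \<rho> x = x" using sA br fx unfolding supports_def fixes_pointwise_def by blast
  moreover have "\<sigma> = \<sigma>' \<circ> \<rho>" unfolding \<rho>_def using b2
    by (auto simp: fun_eq_iff bij_is_surj surj_f_inv_f)
  ultimately show ?thesis using aa br b2 unfolding atom_action_def by metis
qed

lemma extend_perm:
  fixes B K T :: "nat set"
  assumes fB: "finite B" and fK: "finite K" and dB: "B \<inter> T = {}" and dK: "K \<inter> T = {}"
    and cBK: "card B \<le> card K"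
  shows "\<exists>\<tau>. bij \<tau> \<and> (\<forall>a\<in>T. \<tau> a = a) \<and> \<tau> ` B \<subseteq> K"
proof -
  define C where "C = B \<union> K"
  have fC: "finite C" unfolding C_def using fB fK by simp
  obtain Q1 where Q1: "Q1 \<subseteq> K" "card Q1 = card B" "finite Q1"
    using obtain_subset_with_card_n[OF cBK] by blast
  define P2 where "P2 = C - B"
  define Q2 where "Q2 = C - Q1"
  have cP2: "card P2 = card C - card B" unfolding P2_def C_def using fB fK
    by (simp add: card_Diff_subset)
  have cQ2: "card Q2 = card C - card Q1" unfolding Q2_def C_def using fK Q1 fB
    by (metis C_def card_Diff_subset fC finite_subset le_supI2)
  obtain f1 where f1: "bij_betw f1 B Q1" using finite_same_card_bij[OF fB Q1(3)] Q1(2) by metis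
  obtain f2 where f2: "bij_betw f2 P2 Q2"
    using finite_same_card_bij[of P2 Q2] cP2 cQ2 Q1(2) fC unfolding P2_def Q2_def by auto
  define \<tau> where "\<tau> a = (if a \<in> B then f1 a else if a \<in> C then f2 a else a)" for a
  have t1: "bij_betw \<tau> B Q1" using f1 by (rule bij_betw_cong[THEN iffD1, rotated]) (simp add: \<tau>_def)
  have t2: "bij_betw \<tau> P2 Q2" using f2 by (rule bij_betw_cong[THEN iffD1, rotated]) (simp add: \<tau>_def P2_def)
  have t3: "bij_betw \<tau> (-C) (-C)"
    by (rule bij_betw_cong[THEN iffD1, rotated, of id]) (auto simp: \<tau>_def C_def)
  have "bij_betw \<tau> (B \<union> P2 \<union> -C) (Q1 \<union> Q2 \<union> -C)"
    apply (rule bij_betw_combine[OF bij_betw_combine[OF t1 t2] t3])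
    using Q1(1) unfolding Q2_def C_def apply blast
    using Q1(1) unfolding Q2_def C_def by blast
  moreover have "B \<union> P2 \<union> -C = UNIV" unfolding P2_def by blast
  moreover have "Q1 \<union> Q2 \<union> -C = UNIV" unfolding Q2_def by blast
  ultimately have "bij \<tau>" by simp
  moreover have "\<forall>a\<in>T. \<tau> a = a" using dB dK unfolding \<tau>_def C_def by auto
  moreover have "\<tau> ` B \<subseteq> K" using t1 Q1(1) by (auto simp: bij_betw_def)
  ultimately show ?thesis by blast
qed

lemma finite_supported_in_orbit:
  fixes act :: "(nat \<Rightarrow> nat) \<Rightarrow> 'm \<Rightarrow> 'm"
  assumes aa: "atom_action act" and fA: "finite A" and sA: "supports act A x" and fT: "finite T"
  shows "finite {m \<in> orbit_fix act S x. supports act T m}"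
proof -
  have "infinite (-T)" using fT by (simp add: Compl_eq_Diff_UNIV infinite_UNIV_nat Diff_infinite_finite)
  then obtain K where K: "finite K" "card K = card A" "K \<subseteq> -T"
    using infinite_arbitrarily_large by blast
  define D where "D = T \<union> K"
  define G where "G f = act (SOME \<sigma>. bij \<sigma> \<and> (\<forall>a\<in>A. \<sigma> a = f a)) x" for f
  have "{m \<in> orbit_fix act S x. supports act T m} \<subseteq> G ` (\<Pi>\<^sub>E a\<in>A. D)"
  proof
    fix m assume "m \<in> {m \<in> orbit_fix act S x. supports act T m}"
    then obtain \<pi> where m: "m = act \<pi> x" "bij \<pi>" and sm: "supports act T m"
      unfolding orbit_fix_def fixes_pointwise_def by blast
    define B where "B = \<pi> ` A - T"
    have cB: "card B \<le> card K" unfolding B_def K(2) using fA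
      by (meson card_Diff_subset card_image_le diff_le_self dual_order.trans finite_imageI
          card_mono Diff_subset)
    obtain \<tau> where \<tau>: "bij \<tau>" "\<forall>a\<in>T. \<tau> a = a" "\<tau> ` B \<subseteq> K"
      using extend_perm[of B K T] cB K fA unfolding B_def by blast
    define \<sigma> where "\<sigma> = \<tau> \<circ> \<pi>"
    have b\<sigma>: "bij \<sigma>" unfolding \<sigma>_def using \<tau>(1) m(2) by (simp add: bij_comp)
    have "act \<sigma> x = act \<tau> (act \<pi> x)" unfolding \<sigma>_def using aa \<tau>(1) m(2)
      unfolding atom_action_def by blast
    also have "\<dots> = m" using m(1) sm \<tau>(1,2) unfolding supports_def fixes_pointwise_def by blast
    finally have as: "act \<sigma> x = m" .
    define f where "f = restrict \<sigma> A"
    have fP: "f \<in> (\<Pi>\<^sub>E a\<in>A. D)"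
    proof -
      have "\<sigma> a \<in> D" if "a \<in> A" for a
      proof (cases "\<pi> a \<in> T")
        case True thus ?thesis using \<tau>(2) unfolding \<sigma>_def D_def by simp
      next
        case False hence "\<pi> a \<in> B" unfolding B_def using that by blast
        thus ?thesis using \<tau>(3) unfolding \<sigma>_def D_def by auto
      qed
      thus ?thesis unfolding f_def by auto
    qed
    have ex: "\<exists>\<sigma>'. bij \<sigma>' \<and> (\<forall>a\<in>A. \<sigma>' a = f a)" using b\<sigma> unfolding f_def by auto
    define \<sigma>' where "\<sigma>' = (SOME \<sigma>. bij \<sigma> \<and> (\<forall>a\<in>A. \<sigma> a = f a))"
    have "bij \<sigma>' \<and> (\<forall>a\<in>A. \<sigma>' a = f a)" unfolding \<sigma>'_def using someI_ex[OF ex] .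
    hence "act \<sigma>' x = act \<sigma> x" using act_agree[OF aa sA, of \<sigma>' \<sigma>] b\<sigma> unfolding f_def by auto
    hence "G f = m" unfolding G_def \<sigma>'_def[symmetric] using as by simp
    thus "m \<in> G ` (\<Pi>\<^sub>E a\<in>A. D)" using fP by blast
  qed
  moreover have "finite (\<Pi>\<^sub>E a\<in>A. D)" using fA fT K(1) unfolding D_def by (simp add: finite_PiE)
  ultimately show ?thesis by (meson finite_imageI finite_subset)
qed

lemma finite_supported:
  fixes act :: "(nat \<Rightarrow> nat) \<Rightarrow> 'm::monoid_mult \<Rightarrow> 'm"
  assumes om: "orbit_finite_monoid act" and fT: "finite T"
  shows "finite {m. supports act T m}"
proof -
  have aa: "atom_action act" using om unfolding orbit_finite_monoid_def by blast
  have of: "orbit_finite act (UNIV :: 'm set)" using om unfolding orbit_finite_monoid_def by blast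
  then obtain S F where SF: "finite F" "(UNIV :: 'm set) = (\<Union>x\<in>F. orbit_fix act S x)"
    and fs: "\<forall>x. finitely_supported act x"
    unfolding orbit_finite_def by blast
  have "{m. supports act T m} = (\<Union>x\<in>F. {m \<in> orbit_fix act S x. supports act T m})"
    using SF(2) by blast
  moreover have "finite {m \<in> orbit_fix act S x. supports act T m}" for x
  proof -
    obtain A where "finite A" "supports act A x" using fs unfolding finitely_supported_def by blast
    thus ?thesis using finite_supported_in_orbit[OF aa _ _ fT] by blast
  qed
  ultimately show ?thesis using SF(1) by simp
qed

lemma idem_power:
  fixes act :: "(nat \<Rightarrow> nat) \<Rightarrow> 'm::monoid_mult \<Rightarrow> 'm"
  assumes om: "orbit_finite_monoid act"
  shows "\<exists>N>0. (w::'m) ^ N * w ^ N = w ^ N"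
proof -
  obtain A0 where A0: "finite A0" "supports act A0 w"
    using om unfolding orbit_finite_monoid_def orbit_finite_def finitely_supported_def by blast
  obtain S0 where S0: "finite S0"
    "\<forall>\<pi>. fixes_pointwise \<pi> S0 \<longrightarrow> (\<forall>x y. act \<pi> (x * y) = act \<pi> x * act \<pi> y)"
    using om unfolding orbit_finite_monoid_def by blast
  define T where "T = A0 \<union> S0"
  have "supports act T (w ^ Suc n)" for n
    unfolding supports_def
  proof (intro allI impI)
    fix \<pi> assume fp: "fixes_pointwise \<pi> T"
    hence f0: "fixes_pointwise \<pi> A0" "fixes_pointwise \<pi> S0"
      unfolding fixes_pointwise_def T_def by auto
    show "act \<pi> (w ^ Suc n) = w ^ Suc n"
    proof (induction n)
      case 0 thus ?case using A0(2) f0(1) unfolding supports_def by simp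
    next
      case (Suc n)
      have "act \<pi> (w ^ Suc (Suc n)) = act \<pi> (w * w ^ Suc n)" by simp
      also have "\<dots> = act \<pi> w * act \<pi> (w ^ Suc n)" using S0(2) f0(2) by blast
      also have "\<dots> = w ^ Suc (Suc n)" using Suc A0(2) f0(1) unfolding supports_def by simp
      finally show ?case .
    qed
  qed
  hence "range (\<lambda>n. w ^ Suc n) \<subseteq> {m. supports act T m}" by blast
  hence fr: "finite (range (\<lambda>n. w ^ Suc n))"
    using finite_supported[OF om] A0(1) S0(1) unfolding T_def by (meson finite_Un finite_subset)
  have "\<not> inj (\<lambda>n. w ^ Suc n)"
    using finite_imageD[OF fr] infinite_UNIV_nat by blast
  then obtain i j where ij: "i \<noteq> j" "w ^ Suc i = w ^ Suc j" unfolding inj_def by blast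
  then obtain p k where pk: "p > 0" "k > 0" "w ^ p = w ^ (p + k)"
  proof (cases "i < j")
    case True thus ?thesis using that[of "Suc i" "j - i"] ij by simp
  next
    case False hence "j < i" using ij by simp
    thus ?thesis using that[of "Suc j" "i - j"] ij by simp
  qed
  have per: "w ^ (p + t * k) = w ^ p" for t
  proof (induction t)
    case 0 thus ?case by simp
  next
    case (Suc t)
    have "w ^ (p + Suc t * k) = w ^ (p + k) * w ^ (t * k)" by (simp add: power_add algebra_simps)
    also have "\<dots> = w ^ (p + t * k)" using pk(3) by (simp add: power_add)
    finally show ?case using Suc by simp
  qed
  have per2: "w ^ (q + t * k) = w ^ q" if "q \<ge> p" for q t
  proof -
    have e: "p + t * k + (q - p) = q + t * k" using that by simp
    have "w ^ (q + t * k) = w ^ (p + t * k) * w ^ (q - p)"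
      by (metis power_add e)
    also have "\<dots> = w ^ q" by (metis per power_add le_add_diff_inverse that)
    finally show ?thesis .
  qed
  have "p * k \<ge> p" using pk(2) by simp
  hence "w ^ (p * k) * w ^ (p * k) = w ^ (p * k)"
    by (metis power_add per2)
  moreover have "p * k > 0" using pk by simp
  ultimately show ?thesis by blast
qed

lemma pow_conj:
  fixes u x w :: "'m::monoid_mult"
  assumes "x = u * x * w"
  shows "x = u ^ n * x * w ^ n"
proof (induction n)
  case 0 thus ?case by simp
next
  case (Suc n)
  have "u ^ Suc n * x * w ^ Suc n = (u ^ n * u) * x * (w * w ^ n)"
    by (simp only: power_Suc2[of u n] power_Suc[of w n])
  also have "\<dots> = u ^ n * (u * x * w) * w ^ n" by (simp only: mult.assoc)
  also have "\<dots> = u ^ n * x * w ^ n" by (simp only: assms[symmetric])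
  also have "\<dots> = x" by (simp only: Suc[symmetric])
  finally show ?case by (rule sym)
qed

lemma R_stable:
  fixes act :: "(nat \<Rightarrow> nat) \<Rightarrow> 'm::monoid_mult \<Rightarrow> 'm" and u x y v :: 'm
  assumes om: "orbit_finite_monoid act" and h: "u * (x * y) * v = x"
  shows "\<exists>r. x * y * r = x"
proof -
  define w where "w = y * v"
  have "u * x * w = u * (x * y) * v" unfolding w_def by (simp only: mult.assoc)
  also have "\<dots> = x" by (rule h)
  finally have "u * x * w = x" .
  hence "x = u * x * w" by (rule sym)
  obtain N where N: "N > 0" "w ^ N * w ^ N = w ^ N" using idem_power[OF om] by blast
  have x: "x = u ^ N * x * w ^ N" using pow_conj \<open>x = u * x * w\<close> by blast
  have "x * w ^ N = (u ^ N * x * w ^ N) * w ^ N" by (simp only: x[symmetric])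
  also have "\<dots> = u ^ N * x * (w ^ N * w ^ N)" by (simp only: mult.assoc)
  also have "\<dots> = x" by (simp only: N(2) x[symmetric])
  finally have xe: "x * w ^ N = x" .
  obtain M where "N = Suc M" using N(1) gr0_implies_Suc by blast
  hence NM: "N = Suc M" .
  have "x = x * w ^ N" using xe by (rule sym)
  also have "\<dots> = x * y * (v * w ^ M)" unfolding w_def NM by (simp only: power_Suc mult.assoc)
  finally show ?thesis by (rule_tac x="v * w ^ M" in exI) (rule sym)
qed

lemma L_stable:
  fixes act :: "(nat \<Rightarrow> nat) \<Rightarrow> 'm::monoid_mult \<Rightarrow> 'm" and u x y v :: 'm
  assumes om: "orbit_finite_monoid act" and h: "u * (x * y) * v = y"
  shows "\<exists>l. l * x * y = y"
proof -
  define w where "w = u * x"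
  have "w * y * v = u * (x * y) * v" unfolding w_def by (simp only: mult.assoc)
  also have "\<dots> = y" by (rule h)
  finally have "w * y * v = y" .
  hence "y = w * y * v" by (rule sym)
  obtain N where N: "N > 0" "w ^ N * w ^ N = w ^ N" using idem_power[OF om] by blast
  have y: "y = w ^ N * y * v ^ N" using pow_conj \<open>y = w * y * v\<close> by blast
  have "w ^ N * y = w ^ N * (w ^ N * y * v ^ N)" by (simp only: y[symmetric])
  also have "\<dots> = (w ^ N * w ^ N) * y * v ^ N" by (simp only: mult.assoc)
  also have "\<dots> = y" by (simp only: N(2) y[symmetric])
  finally have ye: "w ^ N * y = y" .
  obtain M where "N = Suc M" using N(1) gr0_implies_Suc by blast
  hence NM: "N = Suc M" .
  have "y = w ^ N * y" using ye by (rule sym)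
  also have "\<dots> = (w ^ M * u) * x * y" unfolding w_def NM by (simp only: power_Suc2 mult.assoc)
  finally show ?thesis by (rule_tac x="w ^ M * u" in exI) (rule sym)
qed

definition P2 :: "'m::monoid_mult \<Rightarrow> 'm \<Rightarrow> bool" where
  "P2 a b \<longleftrightarrow> (\<exists>r. a * b * r = a) \<and> (\<exists>l. l * a * b = b)"

fun ch :: "'m::monoid_mult list \<Rightarrow> bool" where
  "ch (a # b # rest) = (P2 a b \<and> ch (b # rest))"
| "ch _ = True"

lemma ch_nth: "ch xs \<longleftrightarrow> (\<forall>i. i + 1 < length xs \<longrightarrow> P2 (xs ! i) (xs ! (i + 1)))"
proof (induction xs rule: ch.induct)
  case (1 a b rest)
  show ?case
  proof
    assume "ch (a # b # rest)"
    thus "\<forall>i. i + 1 < length (a # b # rest) \<longrightarrow> P2 ((a # b # rest) ! i) ((a # b # rest) ! (i + 1))"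
      using 1 by (auto simp: nth_Cons split: nat.splits)
  next
    assume h: "\<forall>i. i + 1 < length (a # b # rest) \<longrightarrow> P2 ((a # b # rest) ! i) ((a # b # rest) ! (i + 1))"
    have "P2 a b" using h[rule_format, of 0] by simp
    moreover have "ch (b # rest)" using 1
      by (auto intro!: h[rule_format, of "Suc _", simplified])
    ultimately show "ch (a # b # rest)" by simp
  qed
qed auto

lemma ch_tl: "ch (v # ys) \<Longrightarrow> ch ys"
  by (cases ys) auto

lemma ch_append: "ch (xs @ ys) \<Longrightarrow> ch xs \<and> ch ys"
  by (induction xs rule: ch.induct) (auto simp: Cons_eq_append_conv neq_Nil_conv dest: ch_tl)

lemma ch_first: "ch (a # xs) \<Longrightarrow> \<exists>r. prod_list (a # xs) * r = a"
proof (induction xs arbitrary: a)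
  case Nil thus ?case by (rule_tac x=1 in exI) simp
next
  case (Cons b xs)
  obtain R where R: "prod_list (b # xs) * R = b" using Cons by auto
  obtain r where r: "a * b * r = a" using Cons.prems by (auto simp: P2_def)
  have "prod_list (a # b # xs) * (R * r) = a * (prod_list (b # xs) * R) * r"
    by (simp add: mult.assoc)
  also have "\<dots> = a" using R r by simp
  finally show ?case by blast
qed

lemma ch_last: "ch (xs @ [a]) \<Longrightarrow> \<exists>l. l * prod_list (xs @ [a]) = a"
proof (induction xs arbitrary: a rule: rev_induct)
  case Nil thus ?case by (rule_tac x=1 in exI) simp
next
  case (snoc b xs)
  have c: "ch (xs @ [b]) \<and> ch [b, a]" using ch_append[of "xs @ [b]" "[a]"] ch_append[of xs "[b, a]"]
    snoc.prems by auto
  obtain L where L: "L * prod_list (xs @ [b]) = b" using snoc.IH c by blast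
  obtain l where l: "l * b * a = a" using c by (auto simp: P2_def)
  have "(l * L) * prod_list ((xs @ [b]) @ [a]) = l * (L * prod_list (xs @ [b])) * a"
    by (simp add: mult.assoc)
  also have "\<dots> = a" using L l by simp
  finally show ?case by auto
qed

lemma smooth2: "smooth [a, b] \<longleftrightarrow> (\<exists>y z. y * (a * b) * z = a) \<and> (\<exists>y z. y * (a * b) * z = b)"
  unfolding smooth_def by (auto simp: less_Suc_eq)

lemma split2:
  assumes "i + 1 < length xs"
  shows "prod_list xs = prod_list (take i xs) * (xs ! i * xs ! (i + 1)) * prod_list (drop (i + 2) xs)"
proof -
  have "drop i xs = xs ! i # drop (Suc i) xs" using assms by (simp add: Cons_nth_drop_Suc)
  moreover have "drop (Suc i) xs = xs ! (i + 1) # drop (i + 2) xs" using assms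
    by (simp add: Cons_nth_drop_Suc)
  ultimately have "xs = take i xs @ [xs ! i, xs ! (i + 1)] @ drop (i + 2) xs"
    by (metis append_Cons append_Nil append_take_drop_id)
  hence "prod_list xs = prod_list (take i xs @ [xs ! i, xs ! (i + 1)] @ drop (i + 2) xs)" by simp
  thus ?thesis by (simp add: mult.assoc)
qed

theorem mainTheorem11:
  fixes act :: "(nat \<Rightarrow> nat) \<Rightarrow> 'm::monoid_mult \<Rightarrow> 'm"
    and xs :: "'m list"
  assumes "orbit_finite_monoid act"
    and "length xs \<ge> 2"
  shows "smooth xs \<longleftrightarrow> (\<forall>i. i + 1 < length xs \<longrightarrow> smooth [xs ! i, xs ! (i + 1)])"
proof
  assume sm: "smooth xs"
  show "\<forall>i. i + 1 < length xs \<longrightarrow> smooth [xs ! i, xs ! (i + 1)]"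
  proof (intro allI impI)
    fix i assume i: "i + 1 < length xs"
    have e: "\<exists>y z. y * (xs ! i * xs ! (i + 1)) * z = xs ! j" if jl: "j < length xs" for j
    proof -
      obtain y z where "y * prod_list xs * z = xs ! j" using sm jl unfolding smooth_def by blast
      hence "(y * prod_list (take i xs)) * (xs ! i * xs ! (i + 1)) * (prod_list (drop (i + 2) xs) * z) = xs ! j"
        using split2[OF i] by (simp add: mult.assoc)
      thus ?thesis by blast
    qed
    show "smooth [xs ! i, xs ! (i + 1)]" unfolding smooth2 using e i by simp
  qed
next
  assume h: "\<forall>i. i + 1 < length xs \<longrightarrow> smooth [xs ! i, xs ! (i + 1)]"
  have "P2 (xs ! i) (xs ! (i + 1))" if il: "i + 1 < length xs" for i
  proof -
    obtain y z y' z' where "y * (xs ! i * xs ! (i + 1)) * z = xs ! i"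
      "y' * (xs ! i * xs ! (i + 1)) * z' = xs ! (i + 1)"
      using h il unfolding smooth2 by blast
    thus ?thesis unfolding P2_def using R_stable[OF assms(1)] L_stable[OF assms(1)] by blast
  qed
  hence c: "ch xs" using ch_nth by blast
  show "smooth xs" unfolding smooth_def
  proof (intro allI impI)
    fix i assume i: "i < length xs"
    define ys where "ys = take i xs"
    define zs where "zs = drop (Suc i) xs"
    have xs: "xs = ys @ [xs ! i] @ zs" unfolding ys_def zs_def using i
      by (simp add: Cons_nth_drop_Suc)
    have c1: "ch (ys @ [xs ! i])" and c2: "ch (xs ! i # zs)"
      using ch_append[of "ys @ [xs ! i]" zs] ch_append[of ys "xs ! i # zs"] c xs by (metis append_assoc append_Cons append_Nil)+
    obtain L where L: "L * prod_list (ys @ [xs ! i]) = xs ! i" using ch_last[OF c1] by blast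
    obtain R where R: "prod_list (xs ! i # zs) * R = xs ! i" using ch_first[OF c2] by blast
    have "L * prod_list xs * R = L * prod_list ys * (prod_list (xs ! i # zs) * R)"
      by (subst xs) (simp add: mult.assoc)
    also have "\<dots> = L * prod_list (ys @ [xs ! i])" using R by (simp add: mult.assoc)
    also have "\<dots> = xs ! i" using L .
    finally show "\<exists>y z. y * prod_list xs * z = xs ! i" by blast
  qed
qed

end
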